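(* Let $0.5<\bar P\le1$, $\epsilon>0$, $\omega\ge0$, $\gamma_0\ge\gamma\ge0$. Let $\omega(t),\epsilon_x(t),\epsilon_y(t),\delta\gamma_t$ be real-valued functions of time with $|\omega(t)|\le\omega$, $\sqrt{\epsilon_x^2(t)+\epsilon_y^2(t)}\le\epsilon$, $|\delta\gamma_t|\le\gamma$, and set $H(t)=[1+\omega(t)]I_z+\epsilon_x(t)I_x+\epsilon_y(t)I_y$, $\gamma_t=\gamma_0+\delta\gamma_t$. Let the qubit density matrix $\rho_t$ evolve according to $$\dot\rho_t=-i[H(t),\rho_t]+\gamma_t(\sigma_x\rho_t\sigma_x-\rho_t)+\gamma_t(\sigma_y\rho_t\sigma_y-\rho_t)+\gamma_t(\sigma_z\rho_t\sigma_z-\rho_t)$$ from an initial state with $\mathrm{tr}(\rho_0^2)=1$. Let $T_d=-\frac{\ln(2\bar P-1)}{8(\gamma_0+\gamma)}$. Then for every $t\in[0,T_d]$, $\rho_t\in\mathcal{D}_d=\{\rho:\mathrm{tr}(\rho^2)\ge\bar P\}$. Consequently, if projective measurements of $\sigma_z$ are performed periodically with period $T_d$, the state remains in $\mathcal{D}_d$.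
   Context: $\sigma_x,\sigma_y,\sigma_z$ are the Pauli matrices $\begin{pmatrix}0&1\\1&0\end{pmatrix},\begin{pmatrix}0&-i\\i&0\end{pmatrix},\begin{pmatrix}1&0\\0&-1\end{pmatrix}$, $I_j=\frac12\sigma_j$, $[A,B]=AB-BA$, units with $\hbar=1$. The purity of $\rho$ is $\mathrm{tr}(\rho^2)$. *)

theory Defs
  imports "HOL-Analysis.Analysis"
begin

type_synonym qmat = "complex^2^2"

definition sigma_x :: qmat where
  "sigma_x = (\<chi> i j. if i = j then 0 else 1)"

definition sigma_y :: qmat where
  "sigma_y = (\<chi> i j. if i = j then 0 else if i = 0 then - \<i> else \<i>)"

definition sigma_z :: qmat where
  "sigma_z = (\<chi> i j. if i \<noteq> j then 0 else if i = 0 then 1 else -1)"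

definition I_x :: qmat where "I_x = (1/2) *\<^sub>R sigma_x"
definition I_y :: qmat where "I_y = (1/2) *\<^sub>R sigma_y"
definition I_z :: qmat where "I_z = (1/2) *\<^sub>R sigma_z"

definition cscale :: "complex \<Rightarrow> qmat \<Rightarrow> qmat" where
  "cscale c M = (\<chi> i j. c * M $ i $ j)"

definition commutator :: "qmat \<Rightarrow> qmat \<Rightarrow> qmat" where
  "commutator A B = A ** B - B ** A"

definition hermitian :: "qmat \<Rightarrow> bool" where
  "hermitian M \<longleftrightarrow> (\<forall>i j. M $ i $ j = cnj (M $ j $ i))"

definition psd :: "qmat \<Rightarrow> bool" where
  "psd M \<longleftrightarrow> (\<forall>v :: complex^2.
     let q = (\<Sum>i\<in>UNIV. \<Sum>j\<in>UNIV. cnj (v $ i) * M $ i $ j * v $ j) in Im q = 0 \<and> Re q \<ge> 0)"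

definition density_matrix :: "qmat \<Rightarrow> bool" where
  "density_matrix M \<longleftrightarrow> hermitian M \<and> psd M \<and> trace M = 1"

text \<open>Purity tr(rho^2); real for Hermitian rho, we take the real part.\<close>
definition purity :: "qmat \<Rightarrow> real" where
  "purity M = Re (trace (M ** M))"

definition hamiltonian :: "real \<Rightarrow> real \<Rightarrow> real \<Rightarrow> qmat" where
  "hamiltonian w ex ey = (1 + w) *\<^sub>R I_z + ex *\<^sub>R I_x + ey *\<^sub>R I_y"

definition lindblad_rhs :: "qmat \<Rightarrow> real \<Rightarrow> qmat \<Rightarrow> qmat" where
  "lindblad_rhs H g rho =
     cscale (- \<i>) (commutator H rho)
     + g *\<^sub>R (sigma_x ** rho ** sigma_x - rho)
     + g *\<^sub>R (sigma_y ** rho ** sigma_y - rho)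
     + g *\<^sub>R (sigma_z ** rho ** sigma_z - rho)"

definition D_d :: "real \<Rightarrow> qmat set" where
  "D_d Pbar = {rho. purity rho \<ge> Pbar}"

end

theory Submission
  imports Defs
begin

lemma comp_simp: fixes M H :: qmat shows
 "lindblad_rhs H g M $ i $ j = - \<i> * (commutator H M $ i $ j) + complex_of_real g * ((if i = j then 2 * trace M else 0) - 4 * M $ i $ j)"
  using exhaust_2[of i] exhaust_2[of j]
  apply (auto simp: lindblad_rhs_def cscale_def sigma_x_def sigma_y_def sigma_z_def matrix_matrix_mult_def sum_2 trace_def algebra_simps)
  apply (auto simp: scaleR_conv_of_real algebra_simps)
  done

lemma L1: fixes M H :: qmat shows "trace (lindblad_rhs H g M) = 0"
  by (simp add: trace_def sum_2 comp_simp commutator_def matrix_matrix_mult_def algebra_simps)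

lemma L2: fixes M H :: qmat shows "trace (M ** lindblad_rhs H g M) = g*(2*(trace M)^2 - 4*trace(M**M))"
  by (simp add: trace_def sum_2 comp_simp commutator_def matrix_matrix_mult_def algebra_simps power2_eq_square)

lemma comp_vd:
  fixes f :: "real \<Rightarrow> qmat"
  assumes "(f has_vector_derivative D) F"
  shows "((\<lambda>t. f t $ i $ j) has_vector_derivative D $ i $ j) F"
  using bounded_linear.has_vector_derivative[OF bounded_linear_compose[OF bounded_linear_vec_nth bounded_linear_vec_nth] assms] .

lemma trace_vd:
  fixes f :: "real \<Rightarrow> qmat"
  assumes "(f has_vector_derivative D) F"
  shows "((\<lambda>t. trace (f t)) has_vector_derivative trace D) F"
proof -
  have "((\<lambda>t. f t $ 1 $ 1 + f t $ 2 $ 2) has_vector_derivative D $ 1 $ 1 + D $ 2 $ 2) F"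
    by (intro has_vector_derivative_add comp_vd assms)
  thus ?thesis by (simp add: trace_def sum_2)
qed

lemma purity_vd:
  fixes f :: "real \<Rightarrow> qmat"
  assumes "(f has_vector_derivative D) (at x within s)"
  shows "((\<lambda>t. purity (f t)) has_real_derivative 2 * Re (trace (f x ** D))) (at x within s)"
proof -
  have "((\<lambda>t. f t $ 1 $ 1 * f t $ 1 $ 1 + f t $ 1 $ 2 * f t $ 2 $ 1 + f t $ 2 $ 1 * f t $ 1 $ 2 + f t $ 2 $ 2 * f t $ 2 $ 2)
     has_vector_derivative
     (f x $ 1 $ 1 * D $ 1 $ 1 + D $ 1 $ 1 * f x $ 1 $ 1) + (f x $ 1 $ 2 * D $ 2 $ 1 + D $ 1 $ 2 * f x $ 2 $ 1)
   + (f x $ 2 $ 1 * D $ 1 $ 2 + D $ 2 $ 1 * f x $ 1 $ 2) + (f x $ 2 $ 2 * D $ 2 $ 2 + D $ 2 $ 2 * f x $ 2 $ 2))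
     (at x within s)"
    by (intro has_vector_derivative_add has_vector_derivative_mult comp_vd assms)
  from bounded_linear.has_vector_derivative[OF bounded_linear_Re this]
  show ?thesis
    unfolding has_real_derivative_iff_has_vector_derivative
    by (simp add: purity_def trace_def sum_2 matrix_matrix_mult_def algebra_simps)
qed

theorem theorem5:
  fixes Pbar eps omega gamma0 gamma t0 :: real
    and om ex ey dg :: "real \<Rightarrow> real"
    and rho :: "real \<Rightarrow> qmat"
  assumes "1/2 < Pbar" and "Pbar \<le> 1"
    and "eps > 0" and "omega \<ge> 0" and "gamma0 \<ge> gamma" and "gamma \<ge> 0"
    and "\<And>t. \<bar>om t\<bar> \<le> omega"
    and "\<And>t. sqrt ((ex t)\<^sup>2 + (ey t)\<^sup>2) \<le> eps"
    and "\<And>t. \<bar>dg t\<bar> \<le> gamma"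
    and "\<And>t. t \<ge> t0 \<Longrightarrow>
           (rho has_vector_derivative
              lindblad_rhs (hamiltonian (om t) (ex t) (ey t)) (gamma0 + dg t) (rho t))
           (at t within {t0..})"
    and "density_matrix (rho t0)" and "purity (rho t0) = 1"
  shows "\<forall>t. t0 \<le> t \<and> 8 * (gamma0 + gamma) * (t - t0) \<le> - ln (2 * Pbar - 1)
           \<longrightarrow> rho t \<in> D_d Pbar"
proof (intro allI impI)
  fix t assume tt: "t0 \<le> t \<and> 8 * (gamma0 + gamma) * (t - t0) \<le> - ln (2 * Pbar - 1)"
  define C where "C = gamma0 + gamma"
  define g where "g s = gamma0 + dg s" for s
  define L where "L s = lindblad_rhs (hamiltonian (om s) (ex s) (ey s)) (g s) (rho s)" for s
  define S where "S = {t0..}"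
  have der: "\<And>s. s \<in> S \<Longrightarrow> (rho has_vector_derivative L s) (at s within S)"
    using assms(10) by (simp add: L_def g_def S_def)
  have gC: "g s \<le> C" for s using assms(9)[of s] by (simp add: g_def C_def abs_le_iff)
  have C0: "C \<ge> 0" using assms(5,6) by (simp add: C_def)
  obtain c where c: "\<And>s. s \<in> S \<Longrightarrow> trace (rho s) = c"
  proof (rule has_vector_derivative_zero_constant[of S "\<lambda>s. trace (rho s)"])
    show "convex S" by (simp add: S_def convex_real_interval)
    fix s assume "s \<in> S"
    from trace_vd[OF der[OF this]] show "((\<lambda>s. trace (rho s)) has_vector_derivative 0) (at s within S)"
      by (simp add: L_def L1)
  qed auto
  have t0S: "t0 \<in> S" by (simp add: S_def)
  have "c = 1" using c[OF t0S] assms(11) by (simp add: density_matrix_def)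
  hence tr1: "\<And>s. s \<in> S \<Longrightarrow> trace (rho s) = 1" using c by simp
  define f where "f s = purity (rho s) - 1/2" for s
  have fder: "(f has_real_derivative - 8 * g s * f s) (at s within S)" if "s \<in> S" for s
  proof -
    have "((\<lambda>s. purity (rho s) - 1/2) has_real_derivative 2 * Re (trace (rho s ** L s)) - 0) (at s within S)"
      by (intro derivative_intros purity_vd der that)
    moreover have "2 * Re (trace (rho s ** L s)) - 0 = - 8 * g s * f s"
      by (simp add: L_def L2 tr1[OF that] f_def purity_def algebra_simps)
    ultimately show ?thesis by (simp add: f_def [abs_def] mult.assoc)
  qed
  have fcont: "continuous_on S f"
    using fder by (meson DERIV_continuous continuous_at_imp_continuous_on continuous_on_eq_continuous_within)
  define h where "h s = (f s)^2 * exp (16 * C * (s - t0))" for s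
  have hder: "(h has_real_derivative 16 * (C - g s) * (f s)^2 * exp (16 * C * (s - t0))) (at s within S)"
    if "s \<in> S" for s
  proof -
    have d1: "((\<lambda>s. f s * f s) has_real_derivative (- 8 * g s * f s) * f s + (- 8 * g s * f s) * f s) (at s within S)"
      using DERIV_mult[OF fder[OF that] fder[OF that]] by (simp add: algebra_simps)
    have d2: "((\<lambda>s. exp (16 * C * (s - t0))) has_real_derivative exp (16 * C * (s - t0)) * (16 * C)) (at s within S)"
      by (auto intro!: derivative_eq_intros)
    have "((\<lambda>s. f s * f s * exp (16 * C * (s - t0))) has_real_derivative
       ((- 8 * g s * f s) * f s + (- 8 * g s * f s) * f s) * exp (16 * C * (s - t0)) + (exp (16 * C * (s - t0)) * (16 * C)) * (f s * f s)) (at s within S)"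
      using DERIV_mult[OF d1 d2] by simp
    thus ?thesis unfolding h_def power2_eq_square
      by (rule DERIV_cong) (simp add: algebra_simps)
  qed
  have hmono: "h t0 \<le> h s" if "t0 \<le> s" for s
  proof (rule DERIV_nonneg_imp_increasing_open[OF that])
    fix x assume x: "t0 < x" "x < s"
    have xS: "x \<in> S" using x by (simp add: S_def)
    have "(h has_real_derivative 16 * (C - g x) * (f x)^2 * exp (16 * C * (x - t0))) (at x within {t0<..})"
      using hder[OF xS] by (rule DERIV_subset) (auto simp: S_def)
    hence "(h has_real_derivative 16 * (C - g x) * (f x)^2 * exp (16 * C * (x - t0))) (at x)"
      using at_within_open[of x "{t0<..}"] x by simp
    moreover have "16 * (C - g x) * (f x)^2 * exp (16 * C * (x - t0)) \<ge> 0"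
      using gC[of x] by (intro mult_nonneg_nonneg) auto
    ultimately show "\<exists>y. (h has_real_derivative y) (at x) \<and> 0 \<le> y" by blast
  next
    have "continuous_on S h"
      using hder by (meson DERIV_continuous continuous_at_imp_continuous_on continuous_on_eq_continuous_within)
    thus "continuous_on {t0..s} h" by (rule continuous_on_subset) (auto simp: S_def)
  qed
  have ft0: "f t0 = 1/2" using assms(12) by (simp add: f_def)
  have ht0: "h t0 = 1/4" by (simp add: h_def ft0 power2_eq_square)
  have fnz: "f s \<noteq> 0" if "t0 \<le> s" for s
    using hmono[OF that] ht0 by (auto simp: h_def)
  have tS: "t0 \<le> t" using tt by simp
  have fpos: "f t > 0"
  proof (rule ccontr)
    assume "\<not> f t > 0"
    hence "f t \<le> 0" by simp
    moreover have "continuous_on {t0..t} f" using fcont by (rule continuous_on_subset) (auto simp: S_def)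
    ultimately obtain x where "t0 \<le> x" "x \<le> t" "f x = 0"
      using IVT2'[of f t 0 t0] tS ft0 by auto
    with fnz show False by blast
  qed
  define a where "a = exp (- 8 * C * (t - t0)) / 2"
  have a2: "a^2 = exp (- 16 * C * (t - t0)) / 4"
    by (simp add: a_def power2_eq_square exp_add[symmetric] field_simps)
  have "(f t)^2 * exp (16 * C * (t - t0)) \<ge> 1/4" using hmono[OF tS] ht0 by (simp add: h_def)
  hence "(f t)^2 \<ge> exp (- 16 * C * (t - t0)) / 4"
  proof -
    assume h4: "(f t)^2 * exp (16 * C * (t - t0)) \<ge> 1/4"
    have E: "exp (- 16 * C * (t - t0)) = inverse (exp (16 * C * (t - t0)))"
      using exp_minus[of "16 * C * (t - t0)"] by simp
    have Ep: "exp (16 * C * (t - t0)) > 0" by simp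
    show ?thesis unfolding E using h4 Ep by (simp add: field_simps)
  qed
  hence "a^2 \<le> (f t)^2" using a2 by simp
  hence fa: "a \<le> f t" using fpos by (simp add: power2_le_iff_abs_le abs_le_iff)
  have P0: "2 * Pbar - 1 > 0" using assms(1) by simp
  have "ln (2 * Pbar - 1) \<le> - 8 * C * (t - t0)" using tt by (simp add: C_def algebra_simps)
  hence "exp (ln (2 * Pbar - 1)) \<le> exp (- 8 * C * (t - t0))" by simp
  hence "2 * Pbar - 1 \<le> 2 * a" using P0 by (simp add: a_def)
  with fa show "rho t \<in> D_d Pbar" by (simp add: D_d_def f_def)
qed

end
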